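(* Let $w \in \mathfrak{S}_n$ be a prism and let $i \in \textsf{supp}(w)$ be unconfined in the reduced words of $w$, with $|\{i-1,i+1\} \cap \textsf{supp}(w)| \le 1$. If $i+1 \notin \textsf{supp}(w)$, then $w$ contains the calibrated mesh pattern $(21, \{(0,1),(1,1),(2,1)\})$ with calibration $x_2 = i+1$, $y_2 = i+1$, or the calibrated mesh pattern $(21, \{(1,0),(1,1),(1,2)\})$ with calibration $x_2 = i+1$, $y_2 = i+1$. If $i-1 \notin \textsf{supp}(w)$, then $w$ contains the calibrated mesh pattern $(21, \{(0,1),(1,1),(2,1)\})$ with calibration $x_1 = i$, $y_1 = i$, or the calibrated mesh pattern $(21, \{(1,0),(1,1),(1,2)\})$ with calibration $x_1 = i$, $y_1 = i$.
   Context: Reduced words, support, Bruhat order: $\sigma_i$ swaps $i,i+1$; a reduced word of $w$ is a minimal-length word $i_1\cdots i_\ell$ with $w=\sigma_{i_1}\cdots\sigma_{i_\ell}$; $\textsf{supp}(w)$ is the set of letters in any reduced word; $u\preceq w$ iff a reduced word of $u$ is a subword of one of $w$; $B(w)=\{u:u\preceq w\}$; $w$ is a prism if $B(w)\cong\mathbf{2}\times X$ for some poset $X$ ($\mathbf{2}$ the two-element chain). A letter $i$ appearing exactly once in a reduced word $s$ is unconfined in $s$ if that occurrence is neither between two $i+1$'s nor between two $i-1$'s; this then holds in all reduced words of $w$. Calibrated mesh patterns: let $p \in \mathfrak{S}_k$ and $M \subseteq \{0,\dots,k\}^2$ (cell $(a,b)$ is the unit square with lower-left corner $(a,b)$ in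 the grid $[0,k+1]^2$ containing the graph $\{(j,p(j))\}$ of $p$). An occurrence of $p$ in $w \in \mathfrak{S}_n$ is a choice of positions $x_1<\cdots<x_k$ such that $w(x_1)\cdots w(x_k)$ is in the same relative order as $p(1)\cdots p(k)$; let $y_1<\cdots<y_k$ be the values $\{w(x_1),\dots,w(x_k)\}$ in increasing order, and set $x_0=y_0=0$, $x_{k+1}=y_{k+1}=n+1$. Such an occurrence is an occurrence of the mesh pattern $(p,M)$ if for every $(a,b)\in M$ there is no $x$ with $x_a < x < x_{a+1}$ and $y_b < w(x) < y_{b+1}$. A calibrated mesh pattern additionally prescribes values for some of the $x_a$ and $y_b$; $w$ contains it if $w$ has an occurrence of $(p,M)$ meeting those prescriptions. Here $21\in\mathfrak{S}_2$ is the permutation $2\,1$. *)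

theory Defs
  imports "HOL-Combinatorics.Combinatorics" "HOL-Library.Sublist"
begin

text \<open>Permutations of {1..n} are functions nat => nat with w permutes {1..n}.
  The simple transposition sigma_i swaps i and i+1.\<close>

definition sigma :: "nat \<Rightarrow> nat \<Rightarrow> nat" where
  "sigma i = Transposition.transpose i (Suc i)"

definition word_perm :: "nat list \<Rightarrow> nat \<Rightarrow> nat" where
  "word_perm ws = foldr (\<lambda>i f. sigma i \<circ> f) ws id"

definition is_word :: "nat \<Rightarrow> nat list \<Rightarrow> bool" where
  "is_word n ws \<longleftrightarrow> set ws \<subseteq> {1..<n}"

definition reduced_word :: "nat \<Rightarrow> (nat \<Rightarrow> nat) \<Rightarrow> nat list \<Rightarrow> bool" where
  "reduced_word n w ws \<longleftrightarrow> is_word n ws \<and> word_perm ws = w \<and>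
     (\<forall>vs. is_word n vs \<and> word_perm vs = w \<longrightarrow> length ws \<le> length vs)"

definition supp :: "nat \<Rightarrow> (nat \<Rightarrow> nat) \<Rightarrow> nat set" where
  "supp n w = {i. \<exists>ws. reduced_word n w ws \<and> i \<in> set ws}"

definition bruhat_le :: "nat \<Rightarrow> (nat \<Rightarrow> nat) \<Rightarrow> (nat \<Rightarrow> nat) \<Rightarrow> bool" where
  "bruhat_le n u w \<longleftrightarrow> (\<exists>us ws. reduced_word n u us \<and> reduced_word n w ws \<and> subseq us ws)"

definition bruhat_interval :: "nat \<Rightarrow> (nat \<Rightarrow> nat) \<Rightarrow> (nat \<Rightarrow> nat) set" where
  "bruhat_interval n w = {u. u permutes {1..n} \<and> bruhat_le n u w}"

text \<open>w is a prism if B(w) (ordered by Bruhat order) is isomorphic to 2 x X for a poset X.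
  Since B(w) is finite, X may be taken to have carrier a subset of nat.
  The chain 2 is bool with False < True; 2 x X carries the product order.\<close>
definition prism :: "nat \<Rightarrow> (nat \<Rightarrow> nat) \<Rightarrow> bool" where
  "prism n w \<longleftrightarrow> (\<exists>(X :: nat set) (leX :: nat \<Rightarrow> nat \<Rightarrow> bool) (f :: (nat \<Rightarrow> nat) \<Rightarrow> bool \<times> nat).
     (\<forall>x\<in>X. leX x x) \<and>
     (\<forall>x\<in>X. \<forall>y\<in>X. leX x y \<and> leX y x \<longrightarrow> x = y) \<and>
     (\<forall>x\<in>X. \<forall>y\<in>X. \<forall>z\<in>X. leX x y \<and> leX y z \<longrightarrow> leX x z) \<and>
     bij_betw f (bruhat_interval n w) (UNIV \<times> X) \<and>
     (\<forall>u\<in>bruhat_interval n w. \<forall>v\<in>bruhat_interval n w.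
        bruhat_le n u v \<longleftrightarrow> (fst (f u) \<le> fst (f v) \<and> leX (snd (f u)) (snd (f v)))))"

definition unconfined :: "nat \<Rightarrow> nat list \<Rightarrow> bool" where
  "unconfined i s \<longleftrightarrow> count_list s i = 1 \<and>
     (\<forall>j < length s. s ! j = i \<longrightarrow>
        \<not> (\<exists>a b. a < j \<and> j < b \<and> b < length s \<and> s ! a = i + 1 \<and> s ! b = i + 1) \<and>
        \<not> (\<exists>a b. a < j \<and> j < b \<and> b < length s \<and> i \<ge> 1 \<and> s ! a = i - 1 \<and> s ! b = i - 1))"

definition mesh_occurrence ::
  "nat \<Rightarrow> (nat \<Rightarrow> nat) \<Rightarrow> nat \<Rightarrow> (nat \<Rightarrow> nat) \<Rightarrow> (nat \<times> nat) set \<Rightarrow> (nat \<Rightarrow> nat) \<Rightarrow> (nat \<Rightarrow> nat) \<Rightarrow> bool" where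
  "mesh_occurrence n w k p M x y \<longleftrightarrow>
     x 0 = 0 \<and> x (k + 1) = n + 1 \<and> y 0 = 0 \<and> y (k + 1) = n + 1 \<and>
     (\<forall>a. a \<le> k \<longrightarrow> x a < x (a + 1)) \<and>
     (\<forall>b. b \<le> k \<longrightarrow> y b < y (b + 1)) \<and>
     (\<forall>j\<in>{1..k}. \<forall>j'\<in>{1..k}. p j < p j' \<longleftrightarrow> w (x j) < w (x j')) \<and>
     y ` {1..k} = (\<lambda>j. w (x j)) ` {1..k} \<and>
     (\<forall>(a, b)\<in>M. \<not> (\<exists>z. x a < z \<and> z < x (a + 1) \<and> y b < w z \<and> w z < y (b + 1)))"

definition pat21 :: "nat \<Rightarrow> nat" where
  "pat21 = Transposition.transpose 1 2"

end

theory Submission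
  imports Defs
begin

lemma sigma_apply: "sigma j k = (if k = j then Suc j else if k = Suc j then j else k)"
  by (simp add: sigma_def transpose_def)

lemma word_perm_Cons: "word_perm (a # ws) = sigma a \<circ> word_perm ws"
  by (simp add: word_perm_def)

lemma word_perm_Nil: "word_perm [] = id"
  by (simp add: word_perm_def)

lemma word_perm_append: "word_perm (xs @ ys) = word_perm xs \<circ> word_perm ys"
  by (induction xs) (auto simp: word_perm_def)

lemma word_perm_fix:
  "(\<forall>j\<in>set ws. k \<noteq> j \<and> k \<noteq> Suc j) \<Longrightarrow> word_perm ws k = k"
  by (induction ws) (auto simp: word_perm_def sigma_apply)

lemma word_perm_pres:
  assumes "\<forall>j\<in>set ws. \<forall>k\<in>S. sigma j k \<in> S" "k \<in> S"
  shows "word_perm ws k \<in> S"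
  using assms by (induction ws arbitrary: k) (auto simp: word_perm_def)

lemma sigma_sigma: "sigma a (sigma a k) = k"
  by (simp add: sigma_apply)

lemma word_perm_rev: "word_perm ws (word_perm (rev ws) k) = k"
proof (induction ws arbitrary: k)
  case Nil then show ?case by (simp add: word_perm_def)
next
  case (Cons a ws)
  show ?case using Cons[of "sigma a k"]
    by (simp add: word_perm_append word_perm_Cons sigma_sigma word_perm_Nil)
qed

lemma pres_low:
  assumes "\<forall>j\<in>set ws. 1 \<le> j \<and> j \<noteq> i" "k \<in> {1..i}"
  shows "word_perm ws k \<in> {1..i}"
  apply (rule word_perm_pres[OF _ assms(2)])
  using assms(1) by (auto simp: sigma_apply)

lemma pres_high:
  assumes "\<forall>j\<in>set ws. j < n \<and> j \<noteq> i \<and> Suc j \<noteq> i" "k \<in> {Suc i..n}"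
  shows "word_perm ws k \<in> {Suc i..n}"
  apply (rule word_perm_pres[OF _ assms(2)])
  using assms(1) by (auto simp: sigma_apply)

lemma pat21_1: "pat21 (Suc 0) = 2" and pat21_2: "pat21 2 = 1"
  by (simp_all add: pat21_def transpose_def)

lemma set12: "{1..2::nat} = {1,2}" by auto

lemma occA:
  assumes "x1 \<in> {1..<x2}" "x2 \<le> n" "w x1 = Suc v" "w x2 = v" "v \<ge> 1" "Suc v \<le> n"
  shows "mesh_occurrence n w 2 pat21 {(0,1),(1,1),(2,1)}
     (\<lambda>a. if a = 0 then 0 else if a = 1 then x1 else if a = 2 then x2 else n+1)
     (\<lambda>a. if a = 0 then 0 else if a = 1 then v else if a = 2 then Suc v else n+1)"
  using assms unfolding mesh_occurrence_def set12
  by (auto simp add: pat21_1 pat21_2)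

lemma occB:
  assumes "x1 \<ge> 1" "Suc x1 \<le> n" "w x1 = v2" "w (Suc x1) = v1" "v1 \<in> {1..<v2}" "v2 \<le> n"
  shows "mesh_occurrence n w 2 pat21 {(1,0),(1,1),(1,2)}
     (\<lambda>a. if a = 0 then 0 else if a = 1 then x1 else if a = 2 then Suc x1 else n+1)
     (\<lambda>a. if a = 0 then 0 else if a = 1 then v1 else if a = 2 then v2 else n+1)"
  using assms unfolding mesh_occurrence_def set12
  by (auto simp add: pat21_1 pat21_2)

lemma not_both:
  assumes uc: "unconfined i (p @ i # q)" and c: "c = i + 1 \<or> (i \<ge> 1 \<and> c = i - 1)"
  shows "\<not> (c \<in> set p \<and> c \<in> set q)"
proof
  assume h: "c \<in> set p \<and> c \<in> set q"
  then obtain a where a: "a < length p" "p ! a = c" by (auto simp: in_set_conv_nth)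
  from h obtain b where b: "b < length q" "q ! b = c" by (auto simp: in_set_conv_nth)
  let ?s = "p @ i # q"
  have j: "length p < length ?s" "?s ! length p = i" by auto
  have sa: "?s ! a = c" using a by (simp add: nth_append)
  have sb: "?s ! (length p + 1 + b) = c" using b by (simp add: nth_append)
  have lb: "length p + 1 + b < length ?s" using b by simp
  have ab: "a < length p" "length p < length p + 1 + b" using a by auto
  have u: "\<not> (\<exists>a b. a < length p \<and> length p < b \<and> b < length ?s \<and> ?s ! a = i + 1 \<and> ?s ! b = i + 1) \<and>
        \<not> (\<exists>a b. a < length p \<and> length p < b \<and> b < length ?s \<and> i \<ge> 1 \<and> ?s ! a = i - 1 \<and> ?s ! b = i - 1)"
    using uc j unfolding unconfined_def by blast
  from c show False
  proof
    assume "c = i + 1"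
    then show False using u ab lb sa sb by blast
  next
    assume "1 \<le> i \<and> c = i - 1"
    then show False using u ab lb sa sb by blast
  qed
qed

theorem proposition3p5:
  fixes n i :: nat and w :: "nat \<Rightarrow> nat"
  assumes "w permutes {1..n}"
    and "prism n w"
    and "i \<in> supp n w"
    and "\<forall>s. reduced_word n w s \<longrightarrow> unconfined i s"
    and "card ({i - 1, i + 1} \<inter> supp n w) \<le> 1"
  shows "(i + 1 \<notin> supp n w \<longrightarrow>
            (\<exists>x y. mesh_occurrence n w 2 pat21 {(0,1),(1,1),(2,1)} x y \<and> x 2 = i + 1 \<and> y 2 = i + 1) \<or>
            (\<exists>x y. mesh_occurrence n w 2 pat21 {(1,0),(1,1),(1,2)} x y \<and> x 2 = i + 1 \<and> y 2 = i + 1))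
       \<and> (i - 1 \<notin> supp n w \<longrightarrow>
            (\<exists>x y. mesh_occurrence n w 2 pat21 {(0,1),(1,1),(2,1)} x y \<and> x 1 = i \<and> y 1 = i) \<or>
            (\<exists>x y. mesh_occurrence n w 2 pat21 {(1,0),(1,1),(1,2)} x y \<and> x 1 = i \<and> y 1 = i))"
proof -
  obtain s where rs: "reduced_word n w s" and iss: "i \<in> set s"
    using assms(3) unfolding supp_def by blast
  have uc: "unconfined i s" using assms(4) rs by blast
  have sw: "set s \<subseteq> {1..<n}" and ws: "word_perm s = w"
    using rs unfolding reduced_word_def is_word_def by auto
  have insupp: "\<And>c. c \<in> set s \<Longrightarrow> c \<in> supp n w" using rs unfolding supp_def by blast
  obtain p q where s: "s = p @ i # q" and ip: "i \<notin> set p"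
    using split_list_first[OF iss] by blast
  have "count_list s i = 1" using uc unfolding unconfined_def by blast
  hence iq: "i \<notin> set q" using ip s by (simp add: count_list_0_iff)
  have i1: "i \<ge> 1" "i < n" using iss sw by auto
  have w: "w = word_perm p \<circ> sigma i \<circ> word_perm q"
    using ws s by (auto simp add: word_perm_append word_perm_Cons comp_assoc)
  have wa: "w k = word_perm p (sigma i (word_perm q k))" for k by (simp add: w)
  have lp: "\<And>j. j \<in> set p \<Longrightarrow> 1 \<le> j \<and> j < n" and lq: "\<And>j. j \<in> set q \<Longrightarrow> 1 \<le> j \<and> j < n"
    using sw s by auto
  have ucs: "unconfined i (p @ i # q)" using uc s by simp
  note nb = not_both[OF ucs]
  show ?thesis
  proof (intro conjI impI)
    assume ns: "i + 1 \<notin> supp n w"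
    have np: "i + 1 \<notin> set p" and nq: "i + 1 \<notin> set q" using ns insupp s by auto
    have "i - 1 \<notin> set p \<or> i - 1 \<notin> set q" using nb[of "i - 1"] i1 by simp
    then show "(\<exists>x y. mesh_occurrence n w 2 pat21 {(0,1),(1,1),(2,1)} x y \<and> x 2 = i + 1 \<and> y 2 = i + 1) \<or>
            (\<exists>x y. mesh_occurrence n w 2 pat21 {(1,0),(1,1),(1,2)} x y \<and> x 2 = i + 1 \<and> y 2 = i + 1)"
    proof
      assume h: "i - 1 \<notin> set p"
      have Pi: "word_perm p i = i" "word_perm p (Suc i) = Suc i"
        using h np ip i1 by (auto intro!: word_perm_fix)
      have Qi: "word_perm q (Suc i) = Suc i"
        using nq iq by (auto intro!: word_perm_fix)
      define x1 where "x1 = word_perm (rev q) i"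
      have x1: "x1 \<in> {1..i}" unfolding x1_def
        using lq iq i1 by (intro pres_low) auto
      have "w x1 = Suc i" unfolding x1_def wa word_perm_rev using Pi by (simp add: sigma_apply)
      moreover have "w (Suc i) = i" unfolding wa using Pi Qi by (simp add: sigma_apply)
      ultimately have "mesh_occurrence n w 2 pat21 {(0,1),(1,1),(2,1)}
     (\<lambda>a. if a = 0 then 0 else if a = 1 then x1 else if a = 2 then Suc i else n+1)
     (\<lambda>a. if a = 0 then 0 else if a = 1 then i else if a = 2 then Suc i else n+1)"
        using x1 i1 by (intro occA) auto
      then show ?thesis by - (rule disjI1, rule exI, rule exI, rule conjI, assumption, simp)
    next
      assume h: "i - 1 \<notin> set q"
      have Qi: "word_perm q i = i" "word_perm q (Suc i) = Suc i"
        using h nq iq i1 by (auto intro!: word_perm_fix)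
      have Pi: "word_perm p (Suc i) = Suc i"
        using np ip by (auto intro!: word_perm_fix)
      have v: "word_perm p i \<in> {1..i}"
        using lp ip i1 by (intro pres_low) auto
      have "w i = Suc i" unfolding wa using Pi Qi by (simp add: sigma_apply)
      moreover have "w (Suc i) = word_perm p i" unfolding wa using Qi by (simp add: sigma_apply)
      ultimately have "mesh_occurrence n w 2 pat21 {(1,0),(1,1),(1,2)}
     (\<lambda>a. if a = 0 then 0 else if a = 1 then i else if a = 2 then Suc i else n+1)
     (\<lambda>a. if a = 0 then 0 else if a = 1 then word_perm p i else if a = 2 then Suc i else n+1)"
        using v i1 by (intro occB) auto
      then show ?thesis by - (rule disjI2, rule exI, rule exI, rule conjI, assumption, simp)
    qed
  next
    assume ns: "i - 1 \<notin> supp n w"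
    have np: "i - 1 \<notin> set p" and nq: "i - 1 \<notin> set q" using ns insupp s by auto
    have "i + 1 \<notin> set p \<or> i + 1 \<notin> set q" using nb[of "i + 1"] by simp
    then show "(\<exists>x y. mesh_occurrence n w 2 pat21 {(0,1),(1,1),(2,1)} x y \<and> x 1 = i \<and> y 1 = i) \<or>
            (\<exists>x y. mesh_occurrence n w 2 pat21 {(1,0),(1,1),(1,2)} x y \<and> x 1 = i \<and> y 1 = i)"
    proof
      assume h: "i + 1 \<notin> set p"
      have Pi: "word_perm p i = i" "word_perm p (Suc i) = Suc i"
        using h np ip i1 by (auto intro!: word_perm_fix)
      have Qi: "word_perm q i = i"
        using nq iq i1 by (auto intro!: word_perm_fix)
      define x2 where "x2 = word_perm (rev q) (Suc i)"
      have x2: "x2 \<in> {Suc i..n}" unfolding x2_def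
        using lq iq nq i1 by (intro pres_high) auto
      have "w x2 = i" unfolding x2_def wa word_perm_rev using Pi by (simp add: sigma_apply)
      moreover have "w i = Suc i" unfolding wa using Pi Qi by (simp add: sigma_apply)
      ultimately have "mesh_occurrence n w 2 pat21 {(0,1),(1,1),(2,1)}
     (\<lambda>a. if a = 0 then 0 else if a = 1 then i else if a = 2 then x2 else n+1)
     (\<lambda>a. if a = 0 then 0 else if a = 1 then i else if a = 2 then Suc i else n+1)"
        using x2 i1 by (intro occA) auto
      then show ?thesis by - (rule disjI1, rule exI, rule exI, rule conjI, assumption, simp)
    next
      assume h: "i + 1 \<notin> set q"
      have Qi: "word_perm q i = i" "word_perm q (Suc i) = Suc i"
        using h nq iq i1 by (auto intro!: word_perm_fix)
      have Pi: "word_perm p i = i"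
        using np ip i1 by (auto intro!: word_perm_fix)
      have v: "word_perm p (Suc i) \<in> {Suc i..n}"
        using lp ip np i1 by (intro pres_high) auto
      have "w (Suc i) = i" unfolding wa using Pi Qi by (simp add: sigma_apply)
      moreover have "w i = word_perm p (Suc i)" unfolding wa using Qi by (simp add: sigma_apply)
      ultimately have "mesh_occurrence n w 2 pat21 {(1,0),(1,1),(1,2)}
     (\<lambda>a. if a = 0 then 0 else if a = 1 then i else if a = 2 then Suc i else n+1)
     (\<lambda>a. if a = 0 then 0 else if a = 1 then i else if a = 2 then word_perm p (Suc i) else n+1)"
        using v i1 by (intro occB) auto
      then show ?thesis by - (rule disjI2, rule exI, rule exI, rule conjI, assumption, simp)
    qed
  qed
qed

end
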